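(* The following two statements are equivalent: (a) (Petersen coloring conjecture) For every bridgeless cubic graph $G$ we have $P \prec G$, where $P$ is the Petersen graph. (b) There exists a sublinear function $f:\mathbb{N}\to\mathbb{N}$ such that every bridgeless cubic graph $G$ (not necessarily connected) admits a proper $5$-edge-coloring $c$ with $|N_G(c)|\le f(|V(G)|)$.
   Context: Graphs are finite, undirected, loopless, and may contain parallel edges. For a vertex $v$ of a graph $G$, $\partial_G(v)$ denotes the set of edges incident to $v$. For cubic graphs $G,H$, an $H$-coloring of $G$ is a map $\phi:E(G)\to E(H)$ such that for every $v\in V(G)$ there is $w\in V(H)$ with $\phi(\partial_G(v))=\partial_H(w)$; we write $H\prec G$ if $G$ has an $H$-coloring. A proper $k$-edge-coloring of $G$ is a map $c:E(G)\to\{1,\dots,k\}$ with adjacent edges receiving different colors. For such $c$ and a vertex $v$, $S_c(v)$ is the set of colors on edges incident to $v$. An edge $uv$ of a cubic graph is poor if $|S_c(u)\cup S_c(v)|=3$, rich if $|S_c(u)\cup S_c(v)|=5$, and abnormal if it is neither poor nor rich. $N_G(c)$ denotes the set of abnormal edges of $G$ with respect to $c$. A function $f:\mathbb{N}\to\mathbb{N}$ is sublinear if $\lim_{n\to\infty} f(n)/n=0$. It may be used that (Jaeger) a cubic graph $G$ satisfies $P\prec G$ iff $G$ admits a proper $5$-edge-coloring with no abnormal edges, and that it suffices to prove the Petersen coloring conjecture for 2-connected cubic graphs. *)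

theory Defs
  imports Complex_Main
begin

text \<open>Parallel edges are allowed (distinct edges may have the same ends).\<close>

definition multigraph :: "'v set \<Rightarrow> 'e set \<Rightarrow> ('e \<Rightarrow> 'v set) \<Rightarrow> bool" where
  "multigraph V E inc \<longleftrightarrow> finite V \<and> finite E \<and>
     (\<forall>e\<in>E. \<exists>u v. u \<noteq> v \<and> u \<in> V \<and> v \<in> V \<and> inc e = {u, v})"

definition incident_edges :: "'e set \<Rightarrow> ('e \<Rightarrow> 'v set) \<Rightarrow> 'v \<Rightarrow> 'e set" where
  "incident_edges E inc v = {e \<in> E. v \<in> inc e}"

definition cubic :: "'v set \<Rightarrow> 'e set \<Rightarrow> ('e \<Rightarrow> 'v set) \<Rightarrow> bool" where
  "cubic V E inc \<longleftrightarrow> multigraph V E inc \<and> (\<forall>v\<in>V. card (incident_edges E inc v) = 3)"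

definition adj_without :: "'e set \<Rightarrow> ('e \<Rightarrow> 'v set) \<Rightarrow> 'e \<Rightarrow> 'v \<Rightarrow> 'v \<Rightarrow> bool" where
  "adj_without E inc e0 u v \<longleftrightarrow> (\<exists>e\<in>E - {e0}. inc e = {u, v})"

definition is_bridge :: "'v set \<Rightarrow> 'e set \<Rightarrow> ('e \<Rightarrow> 'v set) \<Rightarrow> 'e \<Rightarrow> bool" where
  "is_bridge V E inc e \<longleftrightarrow> e \<in> E \<and>
     (\<exists>u v. inc e = {u, v} \<and> \<not> (adj_without E inc e)\<^sup>*\<^sup>* u v)"

definition bridgeless :: "'v set \<Rightarrow> 'e set \<Rightarrow> ('e \<Rightarrow> 'v set) \<Rightarrow> bool" where
  "bridgeless V E inc \<longleftrightarrow> (\<forall>e\<in>E. \<not> is_bridge V E inc e)"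

definition H_coloring ::
  "'w set \<Rightarrow> 'f set \<Rightarrow> ('f \<Rightarrow> 'w set) \<Rightarrow> 'v set \<Rightarrow> 'e set \<Rightarrow> ('e \<Rightarrow> 'v set) \<Rightarrow> ('e \<Rightarrow> 'f) \<Rightarrow> bool" where
  "H_coloring VH EH incH VG EG incG phi \<longleftrightarrow>
     (\<forall>e\<in>EG. phi e \<in> EH) \<and>
     (\<forall>v\<in>VG. \<exists>w\<in>VH. phi ` incident_edges EG incG v = incident_edges EH incH w)"

definition colors_prec ::
  "'w set \<Rightarrow> 'f set \<Rightarrow> ('f \<Rightarrow> 'w set) \<Rightarrow> 'v set \<Rightarrow> 'e set \<Rightarrow> ('e \<Rightarrow> 'v set) \<Rightarrow> bool" where
  "colors_prec VH EH incH VG EG incG \<longleftrightarrow> (\<exists>phi. H_coloring VH EH incH VG EG incG phi)"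

text \<open>The Petersen graph: vertices 0..9, edges 0..14; outer 5-cycle 0-1-2-3-4,
 spokes i -- i+5, inner pentagram 5-7-9-6-8.\<close>
definition petersen_V :: "nat set" where "petersen_V = {0..<10}"
definition petersen_E :: "nat set" where "petersen_E = {0..<15}"
definition petersen_inc :: "nat \<Rightarrow> nat set" where
  "petersen_inc e =
     (if e < 5 then {e, (e + 1) mod 5}
      else if e < 10 then {e - 5, e}
      else {5 + (e - 10), 5 + ((e - 10 + 2) mod 5)})"

definition petersen_colorable :: "'v set \<Rightarrow> 'e set \<Rightarrow> ('e \<Rightarrow> 'v set) \<Rightarrow> bool" where
  "petersen_colorable V E inc \<longleftrightarrow> colors_prec petersen_V petersen_E petersen_inc V E inc"

definition proper_edge_coloring :: "nat \<Rightarrow> 'e set \<Rightarrow> ('e \<Rightarrow> 'v set) \<Rightarrow> ('e \<Rightarrow> nat) \<Rightarrow> bool" where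
  "proper_edge_coloring k E inc c \<longleftrightarrow>
     (\<forall>e\<in>E. c e \<in> {1..k}) \<and>
     (\<forall>e\<in>E. \<forall>e'\<in>E. e \<noteq> e' \<and> inc e \<inter> inc e' \<noteq> {} \<longrightarrow> c e \<noteq> c e')"

definition S_col :: "'e set \<Rightarrow> ('e \<Rightarrow> 'v set) \<Rightarrow> ('e \<Rightarrow> nat) \<Rightarrow> 'v \<Rightarrow> nat set" where
  "S_col E inc c v = c ` incident_edges E inc v"

definition poor_edge :: "'e set \<Rightarrow> ('e \<Rightarrow> 'v set) \<Rightarrow> ('e \<Rightarrow> nat) \<Rightarrow> 'e \<Rightarrow> bool" where
  "poor_edge E inc c e \<longleftrightarrow> (\<exists>u v. inc e = {u, v} \<and> card (S_col E inc c u \<union> S_col E inc c v) = 3)"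

definition rich_edge :: "'e set \<Rightarrow> ('e \<Rightarrow> 'v set) \<Rightarrow> ('e \<Rightarrow> nat) \<Rightarrow> 'e \<Rightarrow> bool" where
  "rich_edge E inc c e \<longleftrightarrow> (\<exists>u v. inc e = {u, v} \<and> card (S_col E inc c u \<union> S_col E inc c v) = 5)"

definition abnormal_edges :: "'e set \<Rightarrow> ('e \<Rightarrow> 'v set) \<Rightarrow> ('e \<Rightarrow> nat) \<Rightarrow> 'e set" where
  "abnormal_edges E inc c = {e \<in> E. \<not> poor_edge E inc c e \<and> \<not> rich_edge E inc c e}"

definition sublinear :: "(nat \<Rightarrow> nat) \<Rightarrow> bool" where
  "sublinear f \<longleftrightarrow> (\<lambda>n. real (f n) / real n) \<longlonglongrightarrow> 0"

end

theory Submission imports Defs "HOL-Library.Nat_Bijection" begin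
definition pincT :: "nat \<Rightarrow> nat set" where "pincT e = [{0,1},{1,2},{2,3},{3,4},{4,0},{0,5},{1,6},{2,7},{3,8},{4,9},{5,7},{6,8},{7,9},{8,5},{9,6}] ! e"
definition cP :: "nat \<Rightarrow> nat" where "cP e = [5,2,4,1,3,4,1,3,5,2,1,3,5,2,4] ! e"
definition SPt :: "nat \<Rightarrow> nat set" where "SPt w = {1..5} - [{1,2},{3,4},{1,5},{2,3},{4,5},{3,5},{2,5},{2,4},{1,4},{1,3}] ! w"
definition starT :: "nat \<Rightarrow> nat set" where "starT w = set (filter (\<lambda>e. w \<in> pincT e) [0..<15])"
definition eA :: "nat \<Rightarrow> nat \<Rightarrow> nat" where "eA w x = hd (filter (\<lambda>e. w \<in> pincT e \<and> cP e = x) [0..<15])"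

lemma pinc_tab0: "\<forall>e\<in>set [0..<15]. petersen_inc e = pincT e"
  unfolding pincT_def petersen_inc_def by code_simp
lemma pinc_tab: "e < 15 \<Longrightarrow> petersen_inc e = pincT e"
  using pinc_tab0 by simp

lemma F0: "\<forall>w\<in>set [0..<10]. starT w = eA w ` SPt w"
  unfolding starT_def eA_def SPt_def pincT_def cP_def
  by code_simp
lemma F3: "\<forall>w\<in>set [0..<10]. \<forall>w'\<in>set [0..<10]. card (SPt w \<union> SPt w') = 5 \<longrightarrow> (\<forall>x\<in>SPt w \<inter> SPt w'. eA w x = eA w' x)"
  unfolding starT_def eA_def SPt_def pincT_def cP_def
  by code_simp
lemma F1: "\<forall>T\<in>Pow {1..5}. card T = 3 \<longrightarrow> (\<exists>w\<in>set [0..<10]. SPt w = T)"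
  unfolding SPt_def
  by code_simp
lemma G1: "\<forall>w\<in>set [0..<10]. cP ` starT w = SPt w \<and> card (starT w) = 3 \<and> card (SPt w) = 3"
  unfolding starT_def SPt_def pincT_def cP_def
  by code_simp
lemma G2: "\<forall>f\<in>set [0..<15]. \<forall>w\<in>set [0..<10]. \<forall>w'\<in>set [0..<10]. w \<in> pincT f \<and> w' \<in> pincT f \<longrightarrow> card (SPt w \<union> SPt w') \<in> {3,5}"
  unfolding SPt_def pincT_def
  by code_simp
lemma G3: "\<forall>f\<in>set [0..<15]. cP f \<in> {1..5}"
  unfolding cP_def
  by code_simp
lemma setupt: "set [0..<n] = {..<n}" by auto

lemma starP_eq: "incident_edges petersen_E petersen_inc w = starT w"
  unfolding incident_edges_def petersen_E_def starT_def using pinc_tab by auto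

lemma F0': "w < 10 \<Longrightarrow> starT w = eA w ` SPt w" using F0 by (simp add: atLeast0LessThan)
lemma F3': "w < 10 \<Longrightarrow> w' < 10 \<Longrightarrow> card (SPt w \<union> SPt w') = 5 \<Longrightarrow> x \<in> SPt w \<inter> SPt w' \<Longrightarrow> eA w x = eA w' x"
  using F3 by (simp add: atLeast0LessThan)
lemma F1': "T \<subseteq> {1..5} \<Longrightarrow> card T = 3 \<Longrightarrow> \<exists>w<10. SPt w = T"
proof -
  assume a: "T \<subseteq> {1..5}" "card T = 3"
  have "T \<in> Pow {1..5}" using a by simp
  then obtain w where "w \<in> set [0..<10]" "SPt w = T" using F1 a(2) by blast
  then show ?thesis by auto
qed
lemma G1': "w < 10 \<Longrightarrow> cP ` starT w = SPt w \<and> card (starT w) = 3 \<and> card (SPt w) = 3"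
  using G1 by (simp add: atLeast0LessThan)
lemma G2': "f < 15 \<Longrightarrow> w < 10 \<Longrightarrow> w' < 10 \<Longrightarrow> w \<in> pincT f \<Longrightarrow> w' \<in> pincT f \<Longrightarrow> card (SPt w \<union> SPt w') \<in> {3,5}"
  using G2 by (simp add: atLeast0LessThan)
lemma G3': "f < 15 \<Longrightarrow> cP f \<in> {1..5}"
  using G3 by (simp add: atLeast0LessThan)

lemma cubic_facts:
  assumes "cubic V E inc"
  shows "finite V" "finite E" "\<And>e. e \<in> E \<Longrightarrow> \<exists>a b. a \<noteq> b \<and> a \<in> V \<and> b \<in> V \<and> inc e = {a,b}"
    "\<And>v. v \<in> V \<Longrightarrow> card (incident_edges E inc v) = 3"
    "\<And>v. finite (incident_edges E inc v)"
  using assms unfolding cubic_def multigraph_def incident_edges_def by auto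

lemma proper_inj:
  assumes "proper_edge_coloring k E inc c"
  shows "inj_on c (incident_edges E inc v)"
  using assms unfolding proper_edge_coloring_def incident_edges_def inj_on_def by blast

lemma Scol_card:
  assumes "cubic V E inc" "proper_edge_coloring k E inc c" "v \<in> V"
  shows "card (S_col E inc c v) = 3"
  using cubic_facts[OF assms(1)] proper_inj[OF assms(2)] assms(3)
  unfolding S_col_def by (simp add: card_image)

lemma fwd:
  assumes cub: "cubic V E inc" and pc: "petersen_colorable V E inc"
  shows "\<exists>c. proper_edge_coloring 5 E inc c \<and> abnormal_edges E inc c = {}"
proof -
  note cf = cubic_facts[OF cub]
  obtain phi where H: "H_coloring petersen_V petersen_E petersen_inc V E inc phi"
    using pc unfolding petersen_colorable_def colors_prec_def by blast
  have "\<forall>v\<in>V. \<exists>w. w < 10 \<and> phi ` incident_edges E inc v = starT w"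
    using H unfolding H_coloring_def petersen_V_def starP_eq atLeast0LessThan by auto
  then obtain W where W: "\<And>v. v \<in> V \<Longrightarrow> W v < 10 \<and> phi ` incident_edges E inc v = starT (W v)"
    by metis
  have phiE: "\<And>e. e \<in> E \<Longrightarrow> phi e < 15"
    using H unfolding H_coloring_def petersen_E_def by auto
  define c where "c = cP \<circ> phi"
  have Sc: "S_col E inc c v = SPt (W v)" if "v \<in> V" for v
  proof -
    have "S_col E inc c v = cP ` (phi ` incident_edges E inc v)"
      unfolding S_col_def c_def by (simp add: image_comp)
    also have "\<dots> = SPt (W v)" using W[OF that] G1' by auto
    finally show ?thesis .
  qed
  have inj: "inj_on c (incident_edges E inc v)" if "v \<in> V" for v
  proof -
    have "card (c ` incident_edges E inc v) = 3"
      using Sc[OF that] G1' W[OF that] unfolding S_col_def by auto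
    then show ?thesis using cf(4)[OF that] cf(5) inj_on_iff_eq_card by metis
  qed
  have proper: "proper_edge_coloring 5 E inc c"
    unfolding proper_edge_coloring_def
  proof (intro conjI ballI impI)
    fix e assume "e \<in> E" then show "c e \<in> {1..5}" using phiE G3' unfolding c_def by auto
  next
    fix e e' assume ee: "e \<in> E" "e' \<in> E" "e \<noteq> e' \<and> inc e \<inter> inc e' \<noteq> {}"
    then obtain v where v: "v \<in> inc e" "v \<in> inc e'" by blast
    have "v \<in> V" using cf(3)[OF ee(1)] v by auto
    moreover have "e \<in> incident_edges E inc v" "e' \<in> incident_edges E inc v"
      using ee v unfolding incident_edges_def by auto
    ultimately show "c e \<noteq> c e'" using inj ee(3) unfolding inj_on_def by blast
  qed
  have "abnormal_edges E inc c = {}"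
  proof (rule ccontr)
    assume "abnormal_edges E inc c \<noteq> {}"
    then obtain e where e: "e \<in> E" "\<not> poor_edge E inc c e" "\<not> rich_edge E inc c e"
      unfolding abnormal_edges_def by auto
    obtain a b where ab: "a \<noteq> b" "a \<in> V" "b \<in> V" "inc e = {a,b}" using cf(3)[OF e(1)] by blast
    have "e \<in> incident_edges E inc a" "e \<in> incident_edges E inc b"
      using e(1) ab unfolding incident_edges_def by auto
    then have "phi e \<in> starT (W a)" "phi e \<in> starT (W b)" using W ab by auto
    then have "W a \<in> pincT (phi e)" "W b \<in> pincT (phi e)" unfolding starT_def by auto
    then have "card (SPt (W a) \<union> SPt (W b)) \<in> {3,5}"
      using G2' phiE[OF e(1)] W ab by blast
    then have "card (S_col E inc c a \<union> S_col E inc c b) \<in> {3,5}" using Sc ab by simp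
    then show False using e(2,3) ab(4) unfolding poor_edge_def rich_edge_def by blast
  qed
  then show ?thesis using proper by blast
qed

lemma jaeger:
  assumes cub: "cubic V E inc" and pr: "proper_edge_coloring 5 E inc c"
    and nab: "abnormal_edges E inc c = {}"
  shows "petersen_colorable V E inc"
proof -
  note cf = cubic_facts[OF cub]
  define S where "S = S_col E inc c"
  have Ssub: "S v \<subseteq> {1..5}" for v
    using pr unfolding S_def S_col_def proper_edge_coloring_def incident_edges_def by auto
  have Scard: "v \<in> V \<Longrightarrow> card (S v) = 3" for v using Scol_card[OF cub pr] S_def by simp
  define W where "W v = (SOME w. w < 10 \<and> SPt w = S v)" for v
  have W: "W v < 10 \<and> SPt (W v) = S v" if "v \<in> V" for v
    unfolding W_def by (rule someI_ex) (use F1' Ssub Scard that in blast)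
  define pick where "pick e = (SOME u. u \<in> inc e)" for e
  define phi where "phi e = eA (W (pick e)) (c e)" for e
  have key: "phi e = eA (W v) (c e)" if e: "e \<in> E" "v \<in> inc e" for e v
  proof -
    obtain a b where ab: "a \<noteq> b" "a \<in> V" "b \<in> V" "inc e = {a,b}" using cf(3)[OF e(1)] by blast
    define p where "p = pick e"
    have p: "p \<in> inc e" unfolding p_def pick_def by (rule someI) (use e in blast)
    show ?thesis
    proof (cases "p = v")
      case True then show ?thesis unfolding phi_def p_def by simp
    next
      case False
      have pv: "inc e = {p, v}" using ab p e(2) False by auto
      have pV: "p \<in> V" "v \<in> V" using p e(2) ab by auto
      have ce: "c e \<in> S p" "c e \<in> S v"
        using e p unfolding S_def S_col_def incident_edges_def by auto
      have un: "\<And>u v'. inc e = {u, v'} \<Longrightarrow> S u \<union> S v' = S p \<union> S v"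
        using pv by (auto simp: doubleton_eq_iff)
      have "e \<notin> abnormal_edges E inc c" using nab by simp
      then have "poor_edge E inc c e \<or> rich_edge E inc c e" using e(1) unfolding abnormal_edges_def by auto
      then have "card (S p \<union> S v) = 3 \<or> card (S p \<union> S v) = 5"
        unfolding poor_edge_def rich_edge_def S_def[symmetric] using un by metis
      then show ?thesis
      proof
        assume c3: "card (S p \<union> S v) = 3"
        have fin: "finite (S p \<union> S v)" using Ssub finite_subset by (metis finite_atLeastAtMost le_sup_iff)
        have "S p = S p \<union> S v" by (rule card_subset_eq[OF fin]) (use c3 Scard pV in auto)
        moreover have "S v = S p \<union> S v" by (rule card_subset_eq[OF fin]) (use c3 Scard pV in auto)
        ultimately have "S p = S v" by simp
        then have "W p = W v" unfolding W_def by simp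
        then show ?thesis unfolding phi_def p_def by simp
      next
        assume c5: "card (S p \<union> S v) = 5"
        have "eA (W p) (c e) = eA (W v) (c e)"
          using F3'[of "W p" "W v" "c e"] W[OF pV(1)] W[OF pV(2)] c5 ce by auto
        then show ?thesis unfolding phi_def p_def by simp
      qed
    qed
  qed
  have img: "phi ` incident_edges E inc v = incident_edges petersen_E petersen_inc (W v)" if "v \<in> V" for v
  proof -
    have "phi ` incident_edges E inc v = (\<lambda>e. eA (W v) (c e)) ` incident_edges E inc v"
      by (rule image_cong) (auto simp: incident_edges_def key)
    also have "\<dots> = eA (W v) ` (c ` incident_edges E inc v)" by (simp add: image_comp)
    also have "\<dots> = eA (W v) ` SPt (W v)" using W[OF that] unfolding S_def S_col_def by simp
    also have "\<dots> = incident_edges petersen_E petersen_inc (W v)"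
      using F0' W[OF that] starP_eq by simp
    finally show ?thesis .
  qed
  have "H_coloring petersen_V petersen_E petersen_inc V E inc phi"
    unfolding H_coloring_def
  proof (intro conjI ballI)
    fix e assume e: "e \<in> E"
    obtain a b where ab: "a \<noteq> b" "a \<in> V" "b \<in> V" "inc e = {a,b}" using cf(3)[OF e] by blast
    have "e \<in> incident_edges E inc a" using e ab unfolding incident_edges_def by auto
    then have "phi e \<in> incident_edges petersen_E petersen_inc (W a)" using img ab by blast
    then show "phi e \<in> petersen_E" unfolding incident_edges_def by auto
  next
    fix v assume "v \<in> V"
    then show "\<exists>w\<in>petersen_V. phi ` incident_edges E inc v = incident_edges petersen_E petersen_inc w"
      using img W unfolding petersen_V_def by auto
  qed
  then show ?thesis unfolding petersen_colorable_def colors_prec_def by blast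
qed


definition cp :: "nat \<Rightarrow> nat \<Rightarrow> nat" where "cp i x = prod_encode (i, x)"
definition UV :: "nat \<Rightarrow> nat set \<Rightarrow> nat set" where "UV k V = (\<lambda>(i,v). cp i v) ` ({..<k} \<times> V)"
definition Uinc :: "(nat \<Rightarrow> nat set) \<Rightarrow> nat \<Rightarrow> nat set" where
  "Uinc inc x = cp (fst (prod_decode x)) ` inc (snd (prod_decode x))"

lemma cp_eq[simp]: "cp i x = cp j y \<longleftrightarrow> i = j \<and> x = y"
  unfolding cp_def by (metis prod_encode_eq prod.inject)
lemma inj_cp: "inj (cp i)" unfolding inj_def by simp
lemma Uinc_cp[simp]: "Uinc inc (cp i e) = cp i ` inc e"
  unfolding Uinc_def cp_def by (simp add: prod_encode_inverse)
lemma UV_mem: "x \<in> UV k V \<longleftrightarrow> (\<exists>i<k. \<exists>v\<in>V. x = cp i v)"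
  unfolding UV_def by auto

lemma inc_U:
  assumes "i < k"
  shows "incident_edges (UV k E) (Uinc inc) (cp i u) = cp i ` incident_edges E inc u"
  using assms unfolding incident_edges_def UV_mem by auto

lemma card_UV: "finite V \<Longrightarrow> card (UV k V) = k * card V"
  unfolding UV_def
  by (subst card_image) (auto simp: inj_on_def card_cartesian_product)

lemma cubic_U:
  assumes cub: "cubic V E inc"
  shows "cubic (UV k V) (UV k E) (Uinc inc)"
proof -
  note cf = cubic_facts[OF cub]
  have "multigraph (UV k V) (UV k E) (Uinc inc)"
    unfolding multigraph_def
  proof (intro conjI ballI)
    show "finite (UV k V)" "finite (UV k E)" using cf(1,2) unfolding UV_def by auto
  next
    fix x assume "x \<in> UV k E"
    then obtain i e where ie: "i < k" "e \<in> E" "x = cp i e" unfolding UV_mem by blast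
    obtain a b where ab: "a \<noteq> b" "a \<in> V" "b \<in> V" "inc e = {a,b}" using cf(3)[OF ie(2)] by blast
    show "\<exists>u v. u \<noteq> v \<and> u \<in> UV k V \<and> v \<in> UV k V \<and> Uinc inc x = {u, v}"
      by (rule exI[of _ "cp i a"], rule exI[of _ "cp i b"]) (use ie ab in \<open>auto simp: UV_mem\<close>)
  qed
  moreover have "\<forall>v\<in>UV k V. card (incident_edges (UV k E) (Uinc inc) v) = 3"
  proof
    fix x assume "x \<in> UV k V"
    then obtain i v where iv: "i < k" "v \<in> V" "x = cp i v" unfolding UV_mem by blast
    show "card (incident_edges (UV k E) (Uinc inc) x) = 3"
      using inc_U[OF iv(1)] iv cf(4) card_image inj_cp by (metis inj_on_subset subset_UNIV)
  qed
  ultimately show ?thesis unfolding cubic_def by blast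
qed

lemma reach_U:
  assumes "(adj_without E inc e)\<^sup>*\<^sup>* a b" "i < k"
  shows "(adj_without (UV k E) (Uinc inc) (cp i e))\<^sup>*\<^sup>* (cp i a) (cp i b)"
  using assms(1)
proof (induction rule: rtranclp_induct)
  case base then show ?case by simp
next
  case (step y z)
  from step(2) obtain e2 where e2: "e2 \<in> E - {e}" "inc e2 = {y,z}" unfolding adj_without_def by blast
  have "adj_without (UV k E) (Uinc inc) (cp i e) (cp i y) (cp i z)"
    unfolding adj_without_def
    by (rule bexI[of _ "cp i e2"]) (use e2 assms(2) in \<open>auto simp: UV_mem\<close>)
  with step(3) show ?case by (rule rtranclp.rtrancl_into_rtrancl)
qed

lemma doubleton_cp:
  assumes "cp i ` A = {u', v'}"
  obtains u v where "A = {u, v}" "u' = cp i u" "v' = cp i v"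
proof -
  have "u' \<in> cp i ` A" "v' \<in> cp i ` A" using assms by auto
  then obtain u v where uv: "u \<in> A" "v \<in> A" "u' = cp i u" "v' = cp i v" by blast
  have "cp i ` A = cp i ` {u, v}" using assms uv by simp
  then have "A = {u,v}" using inj_cp by (metis inj_image_eq_iff)
  then show ?thesis using that uv by blast
qed

lemma bridgeless_U:
  assumes "bridgeless V E inc"
  shows "bridgeless (UV k V) (UV k E) (Uinc inc)"
  unfolding bridgeless_def
proof (intro ballI notI)
  fix x assume x: "x \<in> UV k E" and br: "is_bridge (UV k V) (UV k E) (Uinc inc) x"
  obtain i e where ie: "i < k" "e \<in> E" "x = cp i e" using x unfolding UV_mem by blast
  from br obtain u' v' where uv': "Uinc inc x = {u', v'}"
    "\<not> (adj_without (UV k E) (Uinc inc) x)\<^sup>*\<^sup>* u' v'" unfolding is_bridge_def by blast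
  obtain u v where uv: "inc e = {u,v}" "u' = cp i u" "v' = cp i v"
    using uv'(1) ie(3) by (auto elim: doubleton_cp)
  have "(adj_without E inc e)\<^sup>*\<^sup>* u v"
    using assms ie(2) uv(1) unfolding bridgeless_def is_bridge_def by blast
  from reach_U[OF this ie(1)] uv' uv ie show False by simp
qed

lemma restrict_U:
  assumes "i < k" and pr: "proper_edge_coloring 5 (UV k E) (Uinc inc) c'"
    and nab: "\<forall>e\<in>E. cp i e \<notin> abnormal_edges (UV k E) (Uinc inc) c'"
  shows "proper_edge_coloring 5 E inc (c' \<circ> cp i) \<and> abnormal_edges E inc (c' \<circ> cp i) = {}"
proof -
  have memU: "e \<in> E \<Longrightarrow> cp i e \<in> UV k E" for e using assms(1) by (auto simp: UV_mem)
  have S: "S_col E inc (c' \<circ> cp i) u = S_col (UV k E) (Uinc inc) c' (cp i u)" for u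
    unfolding S_col_def inc_U[OF assms(1)] by (simp add: image_comp)
  have "proper_edge_coloring 5 E inc (c' \<circ> cp i)"
    using pr memU unfolding proper_edge_coloring_def
    by (auto simp: image_Int[OF inj_cp, symmetric])
  moreover have "abnormal_edges E inc (c' \<circ> cp i) = {}"
  proof (rule ccontr)
    assume "abnormal_edges E inc (c' \<circ> cp i) \<noteq> {}"
    then obtain e where e: "e \<in> E" "\<not> poor_edge E inc (c' \<circ> cp i) e" "\<not> rich_edge E inc (c' \<circ> cp i) e"
      unfolding abnormal_edges_def by auto
    have "poor_edge (UV k E) (Uinc inc) c' (cp i e) \<or> rich_edge (UV k E) (Uinc inc) c' (cp i e)"
      using nab e(1) memU[OF e(1)] unfolding abnormal_edges_def by auto
    then obtain u' v' n where uv': "cp i ` inc e = {u', v'}" "n = 3 \<or> n = 5"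
        "card (S_col (UV k E) (Uinc inc) c' u' \<union> S_col (UV k E) (Uinc inc) c' v') = n"
      unfolding poor_edge_def rich_edge_def by auto
    obtain u v where uv: "inc e = {u,v}" "u' = cp i u" "v' = cp i v"
      using uv'(1) by (auto elim: doubleton_cp)
    have "card (S_col E inc (c' \<circ> cp i) u \<union> S_col E inc (c' \<circ> cp i) v) = n"
      using uv'(3) uv S by simp
    then show False using e(2,3) uv(1) uv'(2) unfolding poor_edge_def rich_edge_def by blast
  qed
  ultimately show ?thesis by blast
qed

lemma bwd:
  assumes sl: "sublinear f"
    and H: "\<forall>(V::nat set) (E::nat set) (inc::nat \<Rightarrow> nat set).
               cubic V E inc \<and> bridgeless V E inc \<longrightarrow>
               (\<exists>c. proper_edge_coloring 5 E inc c \<and>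
                    card (abnormal_edges E inc c) \<le> f (card V))"
    and cub: "cubic (V::nat set) (E::nat set) (inc::nat \<Rightarrow> nat set)" and bl: "bridgeless V E inc"
  shows "petersen_colorable V E inc"
proof (cases "V = {}")
  case True
  then have "E = {}" using cubic_facts(3)[OF cub] by blast
  then show ?thesis using True
    unfolding petersen_colorable_def colors_prec_def H_coloring_def by simp
next
  case False
  note cf = cubic_facts[OF cub]
  define n where "n = card V"
  have npos: "n > 0" using False cf(1) n_def by (simp add: card_gt_0_iff)
  have "eventually (\<lambda>m. real (f m) / real m < 1 / real n) sequentially"
    using sl npos unfolding sublinear_def by (intro order_tendstoD(2)) auto
  then obtain M where M: "\<And>m. m \<ge> M \<Longrightarrow> real (f m) / real m < 1 / real n"
    unfolding eventually_sequentially by blast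
  define k where "k = M + 1"
  have km: "k * n \<ge> M" "k * n > 0"
  proof -
    have "M * 1 \<le> M * n" using npos by (intro mult_le_mono2) auto
    also have "M * n \<le> (M + 1) * n" by simp
    finally show "k * n \<ge> M" unfolding k_def by simp
    show "k * n > 0" using npos unfolding k_def by simp
  qed
  have "real (f (k*n)) / real (k*n) < 1 / real n" using M km by blast
  then have "real (f (k*n)) < real (k*n) / real n" using km npos by (simp add: field_simps)
  then have fk: "f (k*n) < k" using npos by simp
  have "cubic (UV k V) (UV k E) (Uinc inc) \<and> bridgeless (UV k V) (UV k E) (Uinc inc)"
    using cubic_U[OF cub] bridgeless_U[OF bl] by blast
  then obtain c' where c': "proper_edge_coloring 5 (UV k E) (Uinc inc) c'"
    "card (abnormal_edges (UV k E) (Uinc inc) c') \<le> f (card (UV k V))"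
    using H by blast
  have cardA: "card (abnormal_edges (UV k E) (Uinc inc) c') < k"
    using c'(2) fk card_UV[OF cf(1)] n_def by simp
  have "\<exists>i<k. \<forall>e\<in>E. cp i e \<notin> abnormal_edges (UV k E) (Uinc inc) c'"
  proof (rule ccontr)
    assume "\<not> ?thesis"
    then have "\<forall>i\<in>{..<k}. \<exists>e. e \<in> E \<and> cp i e \<in> abnormal_edges (UV k E) (Uinc inc) c'" by auto
    then obtain g where g: "\<And>i. i \<in> {..<k} \<Longrightarrow> g i \<in> E \<and> cp i (g i) \<in> abnormal_edges (UV k E) (Uinc inc) c'"
      by metis
    have fin: "finite (abnormal_edges (UV k E) (Uinc inc) c')"
      using cubic_facts(2)[OF cubic_U[OF cub]] unfolding abnormal_edges_def by simp
    have "card {..<k} \<le> card (abnormal_edges (UV k E) (Uinc inc) c')"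
      by (rule card_inj_on_le[of "\<lambda>i. cp i (g i)"]) (use g fin in \<open>auto simp: inj_on_def\<close>)
    then show False using cardA by simp
  qed
  then obtain i where "i < k" "\<forall>e\<in>E. cp i e \<notin> abnormal_edges (UV k E) (Uinc inc) c'" by blast
  from restrict_U[OF this(1) c'(1) this(2)] show ?thesis using jaeger[OF cub] by blast
qed

theorem mainTheorem1:
  shows "(\<forall>(V::nat set) (E::nat set) (inc::nat \<Rightarrow> nat set).
            cubic V E inc \<and> bridgeless V E inc \<longrightarrow> petersen_colorable V E inc)
         \<longleftrightarrow>
         (\<exists>f::nat \<Rightarrow> nat. sublinear f \<and>
            (\<forall>(V::nat set) (E::nat set) (inc::nat \<Rightarrow> nat set).
               cubic V E inc \<and> bridgeless V E inc \<longrightarrow>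
               (\<exists>c. proper_edge_coloring 5 E inc c \<and>
                    card (abnormal_edges E inc c) \<le> f (card V))))"
proof
  assume A: "\<forall>(V::nat set) (E::nat set) (inc::nat \<Rightarrow> nat set).
            cubic V E inc \<and> bridgeless V E inc \<longrightarrow> petersen_colorable V E inc"
  have "sublinear (\<lambda>_. 0)" unfolding sublinear_def by simp
  moreover have "\<forall>(V::nat set) (E::nat set) (inc::nat \<Rightarrow> nat set).
               cubic V E inc \<and> bridgeless V E inc \<longrightarrow>
               (\<exists>c. proper_edge_coloring 5 E inc c \<and>
                    card (abnormal_edges E inc c) \<le> (\<lambda>_. 0) (card V))"
    using A fwd by fastforce
  ultimately show "\<exists>f::nat \<Rightarrow> nat. sublinear f \<and>
            (\<forall>(V::nat set) (E::nat set) (inc::nat \<Rightarrow> nat set).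
               cubic V E inc \<and> bridgeless V E inc \<longrightarrow>
               (\<exists>c. proper_edge_coloring 5 E inc c \<and>
                    card (abnormal_edges E inc c) \<le> f (card V)))" by blast
next
  assume "\<exists>f::nat \<Rightarrow> nat. sublinear f \<and>
            (\<forall>(V::nat set) (E::nat set) (inc::nat \<Rightarrow> nat set).
               cubic V E inc \<and> bridgeless V E inc \<longrightarrow>
               (\<exists>c. proper_edge_coloring 5 E inc c \<and>
                    card (abnormal_edges E inc c) \<le> f (card V)))"
  then obtain f where "sublinear f" "\<forall>(V::nat set) (E::nat set) (inc::nat \<Rightarrow> nat set).
               cubic V E inc \<and> bridgeless V E inc \<longrightarrow>
               (\<exists>c. proper_edge_coloring 5 E inc c \<and>
                    card (abnormal_edges E inc c) \<le> f (card V))" by blast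
  then show "\<forall>(V::nat set) (E::nat set) (inc::nat \<Rightarrow> nat set).
            cubic V E inc \<and> bridgeless V E inc \<longrightarrow> petersen_colorable V E inc"
    using bwd by blast
qed

end
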